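(* Let $\mathcal C$ be a cartesian closed category with regular epi-mono factorizations, $S$ an object, and $T$ the state monad on $S$. For every $T$-algebra $(X,h)$, with $Y=L(X,h)$, the morphism $e_X^*:X\to Y^S$ is a morphism of $T$-algebras from $(X,h)$ to $(Y^S,\epsilon_Y^S)$, i.e. $e_X^*\circ h=\epsilon_Y^S\circ T(e_X^* )$.
   Context: $U(X)=X^S$, $F(X)=S\times X$, $F\dashv U$, $T=UF$, $TX=(S\times X)^S$. For $f:S\times X\to Z$, $f^*:X\to Z^S$ is its transpose. $\epsilon_Z:S\times Z^S\to Z$ is the counit (evaluation), $\eta_X=(\mathrm{id}_{S\times X})^*$, $\mu_X=(\epsilon_{S\times X})^S$; $q_X:S\times X\to X$ is the second projection. A $T$-algebra is $(X,h)$, $h:TX\to X$, with $h\circ Th=h\circ\mu_X$, $h\circ\eta_X=\mathrm{id}_X$; a morphism $(X,h)\to(X',h')$ is $u:X\to X'$ with $h'\circ Tu=u\circ h$. For a $T$-algebra $(X,h)$, $f_X=h\circ q_{S\times X}^*:S\times X\to X$ is factored as $f_X=m_X\circ e_X$ with $e_X:S\times X\to Y$ a regular epimorphism and $m_X:Y\to X$ a monomorphism; $Y=L(X,h)$ and $e_X^*:X\to Y^S$ is the transpose of $e_X$. *)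

theory Defs
  imports Main
begin

text \<open>Arrows carry a domain and codomain; Cmp C g f is g after f.
Exp C S Z is the exponential Z^S, Ev C S Z : S x Z^S -> Z the evaluation.\<close>

record ('o,'m) ccat =
  Obj :: "'o set"
  Arr :: "'m set"
  Dom :: "'m \<Rightarrow> 'o"
  Cod :: "'m \<Rightarrow> 'o"
  Cmp :: "'m \<Rightarrow> 'm \<Rightarrow> 'm"
  Id  :: "'o \<Rightarrow> 'm"
  Prd :: "'o \<Rightarrow> 'o \<Rightarrow> 'o"
  Pr1 :: "'o \<Rightarrow> 'o \<Rightarrow> 'm"
  Pr2 :: "'o \<Rightarrow> 'o \<Rightarrow> 'm"
  Trm :: "'o"
  Exp :: "'o \<Rightarrow> 'o \<Rightarrow> 'o"
  Ev  :: "'o \<Rightarrow> 'o \<Rightarrow> 'm"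

definition hom :: "('o,'m) ccat \<Rightarrow> 'o \<Rightarrow> 'o \<Rightarrow> 'm set" where
  "hom C A B = {f \<in> Arr C. Dom C f = A \<and> Cod C f = B}"

definition category :: "('o,'m) ccat \<Rightarrow> bool" where
  "category C \<longleftrightarrow>
     (\<forall>f \<in> Arr C. Dom C f \<in> Obj C \<and> Cod C f \<in> Obj C) \<and>
     (\<forall>A \<in> Obj C. Id C A \<in> hom C A A) \<and>
     (\<forall>f \<in> Arr C. \<forall>g \<in> Arr C. Dom C g = Cod C f \<longrightarrow>
        Cmp C g f \<in> hom C (Dom C f) (Cod C g)) \<and>
     (\<forall>f \<in> Arr C. \<forall>g \<in> Arr C. \<forall>k \<in> Arr C. Dom C g = Cod C f \<longrightarrow> Dom C k = Cod C g \<longrightarrow>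
        Cmp C k (Cmp C g f) = Cmp C (Cmp C k g) f) \<and>
     (\<forall>f \<in> Arr C. Cmp C f (Id C (Dom C f)) = f \<and> Cmp C (Id C (Cod C f)) f = f)"

definition has_terminal :: "('o,'m) ccat \<Rightarrow> bool" where
  "has_terminal C \<longleftrightarrow> Trm C \<in> Obj C \<and> (\<forall>A \<in> Obj C. \<exists>!t. t \<in> hom C A (Trm C))"

definition has_products :: "('o,'m) ccat \<Rightarrow> bool" where
  "has_products C \<longleftrightarrow> (\<forall>A \<in> Obj C. \<forall>B \<in> Obj C.
     Prd C A B \<in> Obj C \<and> Pr1 C A B \<in> hom C (Prd C A B) A \<and> Pr2 C A B \<in> hom C (Prd C A B) B \<and>
     (\<forall>Z f g. f \<in> hom C Z A \<longrightarrow> g \<in> hom C Z B \<longrightarrow>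
        (\<exists>!p. p \<in> hom C Z (Prd C A B) \<and> Cmp C (Pr1 C A B) p = f \<and> Cmp C (Pr2 C A B) p = g)))"

definition pmap :: "('o,'m) ccat \<Rightarrow> 'm \<Rightarrow> 'm \<Rightarrow> 'm" where
  "pmap C f g = (THE p. p \<in> hom C (Prd C (Dom C f) (Dom C g)) (Prd C (Cod C f) (Cod C g)) \<and>
      Cmp C (Pr1 C (Cod C f) (Cod C g)) p = Cmp C f (Pr1 C (Dom C f) (Dom C g)) \<and>
      Cmp C (Pr2 C (Cod C f) (Cod C g)) p = Cmp C g (Pr2 C (Dom C f) (Dom C g)))"

definition has_exponentials :: "('o,'m) ccat \<Rightarrow> bool" where
  "has_exponentials C \<longleftrightarrow> (\<forall>S \<in> Obj C. \<forall>Z \<in> Obj C.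
     Exp C S Z \<in> Obj C \<and> Ev C S Z \<in> hom C (Prd C S (Exp C S Z)) Z \<and>
     (\<forall>X \<in> Obj C. \<forall>f \<in> hom C (Prd C S X) Z.
        (\<exists>!g. g \<in> hom C X (Exp C S Z) \<and> Cmp C (Ev C S Z) (pmap C (Id C S) g) = f)))"

definition cartesian_closed :: "('o,'m) ccat \<Rightarrow> bool" where
  "cartesian_closed C \<longleftrightarrow> category C \<and> has_terminal C \<and> has_products C \<and> has_exponentials C"

definition mono :: "('o,'m) ccat \<Rightarrow> 'm \<Rightarrow> bool" where
  "mono C m \<longleftrightarrow> m \<in> Arr C \<and>
     (\<forall>Z a b. a \<in> hom C Z (Dom C m) \<longrightarrow> b \<in> hom C Z (Dom C m) \<longrightarrow>
        Cmp C m a = Cmp C m b \<longrightarrow> a = b)"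

definition regular_epi :: "('o,'m) ccat \<Rightarrow> 'm \<Rightarrow> bool" where
  "regular_epi C e \<longleftrightarrow> e \<in> Arr C \<and>
     (\<exists>P a b. a \<in> hom C P (Dom C e) \<and> b \<in> hom C P (Dom C e) \<and> Cmp C e a = Cmp C e b \<and>
        (\<forall>g \<in> Arr C. Dom C g = Dom C e \<longrightarrow> Cmp C g a = Cmp C g b \<longrightarrow>
           (\<exists>!k. k \<in> hom C (Cod C e) (Cod C g) \<and> Cmp C k e = g)))"

definition has_regepi_mono_factorizations :: "('o,'m) ccat \<Rightarrow> bool" where
  "has_regepi_mono_factorizations C \<longleftrightarrow> (\<forall>f \<in> Arr C. \<exists>e m.
     regular_epi C e \<and> mono C m \<and> Cod C e = Dom C m \<and> f = Cmp C m e)"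

definition transp :: "('o,'m) ccat \<Rightarrow> 'o \<Rightarrow> 'o \<Rightarrow> 'o \<Rightarrow> 'm \<Rightarrow> 'm" where
  "transp C S X Z f = (THE g. g \<in> hom C X (Exp C S Z) \<and> Cmp C (Ev C S Z) (pmap C (Id C S) g) = f)"

definition expmap :: "('o,'m) ccat \<Rightarrow> 'o \<Rightarrow> 'm \<Rightarrow> 'm" where
  "expmap C S u = transp C S (Exp C S (Dom C u)) (Cod C u) (Cmp C u (Ev C S (Dom C u)))"

text \<open>State monad T = UF, F = S x -, on objects and arrows; unit and multiplication.\<close>
definition Tob :: "('o,'m) ccat \<Rightarrow> 'o \<Rightarrow> 'o \<Rightarrow> 'o" where
  "Tob C S X = Exp C S (Prd C S X)"

definition Tmap :: "('o,'m) ccat \<Rightarrow> 'o \<Rightarrow> 'm \<Rightarrow> 'm" where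
  "Tmap C S u = expmap C S (pmap C (Id C S) u)"

definition eta :: "('o,'m) ccat \<Rightarrow> 'o \<Rightarrow> 'o \<Rightarrow> 'm" where
  "eta C S X = transp C S X (Prd C S X) (Id C (Prd C S X))"

definition mu :: "('o,'m) ccat \<Rightarrow> 'o \<Rightarrow> 'o \<Rightarrow> 'm" where
  "mu C S X = expmap C S (Ev C S (Prd C S X))"

definition T_algebra :: "('o,'m) ccat \<Rightarrow> 'o \<Rightarrow> 'o \<Rightarrow> 'm \<Rightarrow> bool" where
  "T_algebra C S X h \<longleftrightarrow> X \<in> Obj C \<and> h \<in> hom C (Tob C S X) X \<and>
     Cmp C h (Tmap C S h) = Cmp C h (mu C S X) \<and> Cmp C h (eta C S X) = Id C X"

definition f_alg :: "('o,'m) ccat \<Rightarrow> 'o \<Rightarrow> 'o \<Rightarrow> 'm \<Rightarrow> 'm" where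
  "f_alg C S X h = Cmp C h (transp C S (Prd C S X) (Prd C S X) (Pr2 C S (Prd C S X)))"

end

theory Submission
  imports Defs
begin

locale cccx =
  fixes C :: "('o,'m) ccat"
  assumes ccc: "cartesian_closed C"
begin

lemma cat: "category C" and prods: "has_products C" and exps: "has_exponentials C"
  using ccc by (auto simp: cartesian_closed_def)

lemma homD: "f \<in> hom C A B \<Longrightarrow> f \<in> Arr C \<and> Dom C f = A \<and> Cod C f = B"
  by (simp add: hom_def)

lemma hom_obj: "f \<in> hom C A B \<Longrightarrow> A \<in> Obj C \<and> B \<in> Obj C"
  using cat unfolding category_def hom_def by auto

lemma comp_hom: "f \<in> hom C A B \<Longrightarrow> g \<in> hom C B D \<Longrightarrow> Cmp C g f \<in> hom C A D"
  using cat unfolding category_def hom_def by auto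

lemma assoc: "f \<in> hom C A B \<Longrightarrow> g \<in> hom C B D \<Longrightarrow> k \<in> hom C D E \<Longrightarrow>
   Cmp C k (Cmp C g f) = Cmp C (Cmp C k g) f"
  using cat unfolding category_def hom_def by auto

lemma id_hom: "A \<in> Obj C \<Longrightarrow> Id C A \<in> hom C A A"
  using cat unfolding category_def by auto

lemma id_l: "f \<in> hom C A B \<Longrightarrow> Cmp C (Id C B) f = f"
  using cat unfolding category_def hom_def by auto

lemma id_r: "f \<in> hom C A B \<Longrightarrow> Cmp C f (Id C A) = f"
  using cat unfolding category_def hom_def by auto

lemma prd: "A \<in> Obj C \<Longrightarrow> B \<in> Obj C \<Longrightarrow> Prd C A B \<in> Obj C \<and>
   Pr1 C A B \<in> hom C (Prd C A B) A \<and> Pr2 C A B \<in> hom C (Prd C A B) B"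
  using prods unfolding has_products_def by auto

lemma prod_unique:
  assumes "A \<in> Obj C" "B \<in> Obj C" "p \<in> hom C Z (Prd C A B)" "q \<in> hom C Z (Prd C A B)"
    "Cmp C (Pr1 C A B) p = Cmp C (Pr1 C A B) q" "Cmp C (Pr2 C A B) p = Cmp C (Pr2 C A B) q"
  shows "p = q"
proof -
  have h1: "Cmp C (Pr1 C A B) p \<in> hom C Z A" "Cmp C (Pr2 C A B) p \<in> hom C Z B"
    using comp_hom assms prd by blast+
  have "\<exists>!r. r \<in> hom C Z (Prd C A B) \<and> Cmp C (Pr1 C A B) r = Cmp C (Pr1 C A B) p
       \<and> Cmp C (Pr2 C A B) r = Cmp C (Pr2 C A B) p"
    using prods h1 assms(1,2) unfolding has_products_def by blast
  then show ?thesis using assms by metis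
qed

lemma pmap:
  assumes "f \<in> hom C A B" "g \<in> hom C A' B'"
  shows "pmap C f g \<in> hom C (Prd C A A') (Prd C B B') \<and>
    Cmp C (Pr1 C B B') (pmap C f g) = Cmp C f (Pr1 C A A') \<and>
    Cmp C (Pr2 C B B') (pmap C f g) = Cmp C g (Pr2 C A A')"
proof -
  have o: "A \<in> Obj C" "B \<in> Obj C" "A' \<in> Obj C" "B' \<in> Obj C" using hom_obj assms by blast+
  have h1: "Cmp C f (Pr1 C A A') \<in> hom C (Prd C A A') B" "Cmp C g (Pr2 C A A') \<in> hom C (Prd C A A') B'"
    using comp_hom assms prd o by blast+
  have ex: "\<exists>!p. p \<in> hom C (Prd C A A') (Prd C B B') \<and> Cmp C (Pr1 C B B') p = Cmp C f (Pr1 C A A')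
       \<and> Cmp C (Pr2 C B B') p = Cmp C g (Pr2 C A A')"
    using prods h1 o unfolding has_products_def by blast
  have "pmap C f g = (THE p. p \<in> hom C (Prd C A A') (Prd C B B') \<and> Cmp C (Pr1 C B B') p = Cmp C f (Pr1 C A A')
       \<and> Cmp C (Pr2 C B B') p = Cmp C g (Pr2 C A A'))"
    unfolding pmap_def using assms by (simp add: hom_def)
  then show ?thesis using theI'[OF ex] by simp
qed

lemma pmap_comp:
  assumes "f \<in> hom C A B" "g \<in> hom C B D" "f' \<in> hom C A' B'" "g' \<in> hom C B' D'"
  shows "pmap C (Cmp C g f) (Cmp C g' f') = Cmp C (pmap C g g') (pmap C f f')"
proof -
  have o: "D \<in> Obj C" "D' \<in> Obj C" "A \<in> Obj C" "A' \<in> Obj C" using hom_obj assms by blast+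
  have gf: "Cmp C g f \<in> hom C A D" "Cmp C g' f' \<in> hom C A' D'" using comp_hom assms by blast+
  note P1 = pmap[OF gf] and P2 = pmap[OF assms(2,4)] and P3 = pmap[OF assms(1,3)]
  have pr: "Pr1 C A A' \<in> hom C (Prd C A A') A" "Pr2 C A A' \<in> hom C (Prd C A A') A'"
    "Pr1 C B B' \<in> hom C (Prd C B B') B" "Pr2 C B B' \<in> hom C (Prd C B B') B'"
    "Pr1 C D D' \<in> hom C (Prd C D D') D" "Pr2 C D D' \<in> hom C (Prd C D D') D'"
    using prd o hom_obj assms by blast+
  have c: "Cmp C (pmap C g g') (pmap C f f') \<in> hom C (Prd C A A') (Prd C D D')"
    using comp_hom P2 P3 by blast
  show ?thesis
  proof (rule prod_unique[OF o(1,2) conjunct1[OF P1] c])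
    have "Cmp C (Pr1 C D D') (Cmp C (pmap C g g') (pmap C f f'))
        = Cmp C (Cmp C (Pr1 C D D') (pmap C g g')) (pmap C f f')"
      using assoc P2 P3 pr by blast
    also have "\<dots> = Cmp C (Cmp C g (Pr1 C B B')) (pmap C f f')" using P2 by simp
    also have "\<dots> = Cmp C g (Cmp C (Pr1 C B B') (pmap C f f'))"
      using assoc P3 pr assms by metis
    also have "\<dots> = Cmp C g (Cmp C f (Pr1 C A A'))" using P3 by simp
    also have "\<dots> = Cmp C (Cmp C g f) (Pr1 C A A')" using assoc pr assms by metis
    finally show "Cmp C (Pr1 C D D') (pmap C (Cmp C g f) (Cmp C g' f')) =
        Cmp C (Pr1 C D D') (Cmp C (pmap C g g') (pmap C f f'))" using P1 by simp
  next
    have "Cmp C (Pr2 C D D') (Cmp C (pmap C g g') (pmap C f f'))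
        = Cmp C (Cmp C (Pr2 C D D') (pmap C g g')) (pmap C f f')"
      using assoc P2 P3 pr by blast
    also have "\<dots> = Cmp C (Cmp C g' (Pr2 C B B')) (pmap C f f')" using P2 by simp
    also have "\<dots> = Cmp C g' (Cmp C (Pr2 C B B') (pmap C f f'))"
      using assoc P3 pr assms by metis
    also have "\<dots> = Cmp C g' (Cmp C f' (Pr2 C A A'))" using P3 by simp
    also have "\<dots> = Cmp C (Cmp C g' f') (Pr2 C A A')" using assoc pr assms by metis
    finally show "Cmp C (Pr2 C D D') (pmap C (Cmp C g f) (Cmp C g' f')) =
        Cmp C (Pr2 C D D') (Cmp C (pmap C g g') (pmap C f f'))" using P1 by simp
  qed
qed

lemma pmap_id_comp:
  assumes "S \<in> Obj C" "f \<in> hom C A B" "g \<in> hom C B D"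
  shows "pmap C (Id C S) (Cmp C g f) = Cmp C (pmap C (Id C S) g) (pmap C (Id C S) f)"
  using pmap_comp[OF id_hom[OF assms(1)] id_hom[OF assms(1)] assms(2,3)] id_l[OF id_hom[OF assms(1)]]
  by simp

lemma expo: "S \<in> Obj C \<Longrightarrow> Z \<in> Obj C \<Longrightarrow> Exp C S Z \<in> Obj C \<and> Ev C S Z \<in> hom C (Prd C S (Exp C S Z)) Z"
  using exps unfolding has_exponentials_def by auto

lemma transp:
  assumes "S \<in> Obj C" "X \<in> Obj C" "Z \<in> Obj C" "f \<in> hom C (Prd C S X) Z"
  shows "transp C S X Z f \<in> hom C X (Exp C S Z) \<and> Cmp C (Ev C S Z) (pmap C (Id C S) (transp C S X Z f)) = f"
proof -
  have "\<exists>!g. g \<in> hom C X (Exp C S Z) \<and> Cmp C (Ev C S Z) (pmap C (Id C S) g) = f"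
    using exps assms unfolding has_exponentials_def by blast
  from theI'[OF this] show ?thesis unfolding transp_def .
qed

lemma transp_unique:
  assumes "S \<in> Obj C" "X \<in> Obj C" "Z \<in> Obj C" "g \<in> hom C X (Exp C S Z)"
    "Cmp C (Ev C S Z) (pmap C (Id C S) g) = f"
  shows "transp C S X Z f = g"
proof -
  have "f \<in> hom C (Prd C S X) Z"
    using assms(5)[symmetric] comp_hom pmap[OF id_hom[OF assms(1)] assms(4)] expo assms by blast
  then have "\<exists>!g. g \<in> hom C X (Exp C S Z) \<and> Cmp C (Ev C S Z) (pmap C (Id C S) g) = f"
    using exps assms unfolding has_exponentials_def by blast
  then show ?thesis using transp[OF assms(1-3) \<open>f \<in> _\<close>] assms(4,5) by metis
qed

lemma transp_precomp:
  assumes "S \<in> Obj C" "Z \<in> Obj C" "f \<in> hom C (Prd C S B) Z" "k \<in> hom C A B"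
  shows "Cmp C (transp C S B Z f) k = transp C S A Z (Cmp C f (pmap C (Id C S) k))"
proof -
  have o: "A \<in> Obj C" "B \<in> Obj C" using hom_obj assms by blast+
  note T = transp[OF assms(1) o(2) assms(2,3)]
  note E = expo[OF assms(1,2)]
  have i: "Id C S \<in> hom C S S" using id_hom assms by blast
  note pk = pmap[OF i assms(4)] and pt = pmap[OF i conjunct1[OF T]]
  have g: "Cmp C (transp C S B Z f) k \<in> hom C A (Exp C S Z)" using comp_hom T assms by blast
  have "Cmp C (Ev C S Z) (pmap C (Id C S) (Cmp C (transp C S B Z f) k))
      = Cmp C (Ev C S Z) (Cmp C (pmap C (Id C S) (transp C S B Z f)) (pmap C (Id C S) k))"
    using pmap_id_comp[OF assms(1) assms(4) conjunct1[OF T]] by simp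
  also have "\<dots> = Cmp C (Cmp C (Ev C S Z) (pmap C (Id C S) (transp C S B Z f))) (pmap C (Id C S) k)"
    using assoc pk pt E by blast
  also have "\<dots> = Cmp C f (pmap C (Id C S) k)" using T by simp
  finally show ?thesis using transp_unique[OF assms(1) o(1) assms(2) g] by metis
qed

lemma expmap_eq:
  assumes "u \<in> hom C A B"
  shows "expmap C S u = transp C S (Exp C S A) B (Cmp C u (Ev C S A))"
  using assms by (simp add: expmap_def hom_def)

lemma expmap_transp:
  assumes "S \<in> Obj C" "X \<in> Obj C" "u \<in> hom C A B" "f \<in> hom C (Prd C S X) A"
  shows "Cmp C (expmap C S u) (transp C S X A f) = transp C S X B (Cmp C u f)"
proof -
  have o: "A \<in> Obj C" "B \<in> Obj C" using hom_obj assms by blast+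
  note T = transp[OF assms(1,2) o(1) assms(4)]
  note E = expo[OF assms(1) o(1)]
  have i: "Id C S \<in> hom C S S" using id_hom assms by blast
  note pt = pmap[OF i conjunct1[OF T]]
  have ue: "Cmp C u (Ev C S A) \<in> hom C (Prd C S (Exp C S A)) B" using comp_hom E assms by blast
  have "Cmp C (expmap C S u) (transp C S X A f)
     = transp C S X B (Cmp C (Cmp C u (Ev C S A)) (pmap C (Id C S) (transp C S X A f)))"
    using expmap_eq[OF assms(3)] transp_precomp[OF assms(1) o(2) ue conjunct1[OF T]] by simp
  also have "Cmp C (Cmp C u (Ev C S A)) (pmap C (Id C S) (transp C S X A f))
     = Cmp C u (Cmp C (Ev C S A) (pmap C (Id C S) (transp C S X A f)))"
    using assoc pt E assms(3) by metis
  also have "\<dots> = Cmp C u f" using T by simp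
  finally show ?thesis .
qed

end

theorem mainTheorem9:
  fixes C :: "('o,'m) ccat" and S X Y :: 'o and h e m :: 'm
  assumes "cartesian_closed C"
    and "has_regepi_mono_factorizations C"
    and "S \<in> Obj C"
    and "T_algebra C S X h"
    and "Y \<in> Obj C"
    and "e \<in> hom C (Prd C S X) Y" and "regular_epi C e"
    and "m \<in> hom C Y X" and "mono C m"
    and "f_alg C S X h = Cmp C m e"
  shows "Cmp C (transp C S X Y e) h
           = Cmp C (expmap C S (Ev C S Y)) (Tmap C S (transp C S X Y e))"
proof -
  interpret cccx C using assms(1) by unfold_locales
  note hT = assms(4)[unfolded T_algebra_def Tob_def]
  have oX: "X \<in> Obj C" using hT by blast
  have hh: "h \<in> hom C (Exp C S (Prd C S X)) X" using hT by blast
  define P where "P = Prd C S X"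
  define TX where "TX = Exp C S P"
  define STX where "STX = Prd C S TX"
  have oP: "P \<in> Obj C" and oTX: "TX \<in> Obj C" and oSTX: "STX \<in> Obj C"
    using prd expo assms(3) oX unfolding P_def TX_def STX_def by blast+
  have hh': "h \<in> hom C TX X" using hh unfolding TX_def P_def .
  have i: "Id C S \<in> hom C S S" using id_hom assms(3) by blast
  have eh: "e \<in> hom C P Y" using assms(6) unfolding P_def .
  have evP: "Ev C S P \<in> hom C STX P" using expo[OF assms(3) oP] unfolding STX_def TX_def by blast
  have evY: "Ev C S Y \<in> hom C (Prd C S (Exp C S Y)) Y" using expo[OF assms(3) assms(5)] by blast
  have pr2P: "Pr2 C S P \<in> hom C (Prd C S P) P" using prd assms(3) oP by blast
  have pr2T: "Pr2 C S STX \<in> hom C (Prd C S STX) STX" using prd assms(3) oSTX by blast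
  define es where "es = transp C S X Y e"
  note ET = transp[OF assms(3) oX assms(5) assms(6)]
  have esh: "es \<in> hom C X (Exp C S Y)" using ET es_def by blast
  note pes = pmap[OF i esh]
  have pesh: "pmap C (Id C S) es \<in> hom C P (Prd C S (Exp C S Y))" using pes unfolding P_def by blast
  note ph = pmap[OF i hh']
  have phh: "pmap C (Id C S) h \<in> hom C STX P" using ph unfolding STX_def P_def by blast
  define q where "q = transp C S P P (Pr2 C S P)"
  define c where "c = transp C S STX STX (Pr2 C S STX)"
  have qh: "q \<in> hom C P TX" using transp[OF assms(3) oP oP pr2P] unfolding q_def TX_def by blast
  have ch: "c \<in> hom C STX (Exp C S STX)" using transp[OF assms(3) oSTX oSTX pr2T] unfolding c_def by blast
  have "Tmap C S es = transp C S TX (Prd C S (Exp C S Y)) (Cmp C (pmap C (Id C S) es) (Ev C S P))"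
    unfolding Tmap_def using expmap_eq[OF pesh] unfolding TX_def .
  have pe_ev: "Cmp C (pmap C (Id C S) es) (Ev C S P) \<in> hom C STX (Prd C S (Exp C S Y))"
    using comp_hom evP pesh by blast
  have R: "Cmp C (expmap C S (Ev C S Y)) (Tmap C S es) = transp C S TX Y (Cmp C e (Ev C S P))"
  proof -
    have "Cmp C (expmap C S (Ev C S Y)) (Tmap C S es)
       = transp C S TX Y (Cmp C (Ev C S Y) (Cmp C (pmap C (Id C S) es) (Ev C S P)))"
      using \<open>Tmap C S es = _\<close> expmap_transp[OF assms(3) oTX evY pe_ev[unfolded STX_def]] by simp
    also have "Cmp C (Ev C S Y) (Cmp C (pmap C (Id C S) es) (Ev C S P))
       = Cmp C (Cmp C (Ev C S Y) (pmap C (Id C S) es)) (Ev C S P)"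
      using assoc evP pesh evY by blast
    also have "\<dots> = Cmp C e (Ev C S P)" using ET es_def by simp
    finally show ?thesis .
  qed
  have L: "Cmp C es h = transp C S TX Y (Cmp C e (pmap C (Id C S) h))"
    using transp_precomp[OF assms(3) assms(5) assms(6) hh'] es_def P_def by simp
  have A: "Cmp C q (pmap C (Id C S) h) = Cmp C (Tmap C S h) c"
  proof -
    have "Cmp C q (pmap C (Id C S) h) = transp C S STX P (Cmp C (Pr2 C S P) (pmap C (Id C S) (pmap C (Id C S) h)))"
      using transp_precomp[OF assms(3) oP pr2P phh] q_def by simp
    also have "Cmp C (Pr2 C S P) (pmap C (Id C S) (pmap C (Id C S) h)) = Cmp C (pmap C (Id C S) h) (Pr2 C S STX)"
      using pmap[OF i phh] by simp
    also have "transp C S STX P (Cmp C (pmap C (Id C S) h) (Pr2 C S STX)) = Cmp C (Tmap C S h) c"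
      unfolding Tmap_def c_def using expmap_transp[OF assms(3) oSTX phh pr2T] by simp
    finally show ?thesis .
  qed
  have B: "Cmp C q (Ev C S P) = Cmp C (mu C S X) c"
  proof -
    have "Cmp C q (Ev C S P) = transp C S STX P (Cmp C (Pr2 C S P) (pmap C (Id C S) (Ev C S P)))"
      using transp_precomp[OF assms(3) oP pr2P evP] q_def by simp
    also have "Cmp C (Pr2 C S P) (pmap C (Id C S) (Ev C S P)) = Cmp C (Ev C S P) (Pr2 C S STX)"
      using pmap[OF i evP] by simp
    also have "transp C S STX P (Cmp C (Ev C S P) (Pr2 C S STX)) = Cmp C (mu C S X) c"
      unfolding mu_def c_def using expmap_transp[OF assms(3) oSTX evP pr2T] P_def by simp
    finally show ?thesis .
  qed
  have evS: "Ev C S STX \<in> hom C (Prd C S (Exp C S STX)) STX" and oE: "Exp C S STX \<in> Obj C"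
    using expo[OF assms(3) oSTX] by blast+
  have Th: "Tmap C S h \<in> hom C (Exp C S STX) TX"
    unfolding Tmap_def expmap_eq[OF phh] TX_def
    using transp[OF assms(3) oE oP comp_hom[OF evS phh]] by blast
  have Mu: "mu C S X \<in> hom C (Exp C S STX) TX"
    unfolding mu_def P_def[symmetric] expmap_eq[OF evP] TX_def
    using transp[OF assms(3) oE oP comp_hom[OF evS evP]] by blast
  have alg: "Cmp C h (Tmap C S h) = Cmp C h (mu C S X)" using hT by blast
  have fa: "Cmp C m e = Cmp C h q" using assms(10) unfolding f_alg_def q_def P_def by simp
  have key: "Cmp C e (pmap C (Id C S) h) = Cmp C e (Ev C S P)"
  proof -
    have mm: "\<And>a b. a \<in> hom C STX Y \<Longrightarrow> b \<in> hom C STX Y \<Longrightarrow> Cmp C m a = Cmp C m b \<Longrightarrow> a = b"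
      using assms(9,8) unfolding mono_def hom_def by auto
    have "Cmp C m (Cmp C e (pmap C (Id C S) h)) = Cmp C (Cmp C m e) (pmap C (Id C S) h)"
      using assoc phh eh assms(8) by blast
    also have "\<dots> = Cmp C h (Cmp C q (pmap C (Id C S) h))" using fa assoc phh qh hh' by metis
    also have "\<dots> = Cmp C (Cmp C h (Tmap C S h)) c" using A assoc ch Th hh' by metis
    also have "\<dots> = Cmp C h (Cmp C (mu C S X) c)" using alg assoc ch Mu hh' by metis
    also have "\<dots> = Cmp C (Cmp C m e) (Ev C S P)" using B fa assoc evP qh hh' by metis
    also have "\<dots> = Cmp C m (Cmp C e (Ev C S P))" using assoc evP eh assms(8) by metis
    finally show ?thesis using mm comp_hom phh evP eh by blast
  qed
  show ?thesis using L R key es_def by simp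
qed

end
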